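(* Let $N\ge 2$, $C\ge 0$, $k\ge 1$ and $L\ge 1$ be integers with $C<\frac{N-1}{2}$, $k\le N-1$, and $$\binom{N-1-C}{k}\ \ge\ \frac{1}{2}\binom{N-1}{k}.$$ Let $\mathcal{A}\subseteq\mathbb{R}^L$, $\mathcal{O}$, $\mathcal{M}$ be action, observation and message spaces, and $\hat{\pi}:\mathcal{O}\times\mathcal{M}^k\to\mathcal{A}$ any function. Fix $o\in\mathcal{O}$ and $\mathbf{m}_{\mathrm{benign}},\mathbf{m}_{\mathrm{adv}}\in\mathcal{M}^{N-1}$ differing in at most $C$ coordinates, and let $$\mathcal{A}_{\mathrm{benign}}:=\bigcup_{T\in\mathcal{H}(N-1,k)}\{\hat{\pi}(o,\mathsf{Ablate}(\mathbf{m}_{\mathrm{benign}},T))\}.$$ Let $0<D\le\binom{N-1}{k}$ and let $T_1,\dots,T_D$ be $D$ distinct elements of $\mathcal{H}(N-1,k)$ chosen uniformly at random without replacement. Define $$\widetilde{\pi}_D(o,\mathbf{m}_{\mathrm{adv}}):=\mathsf{Median}\{\hat{\pi}(o,\mathsf{Ablate}(\mathbf{m}_{\mathrm{adv}},T_d))\}_{d=1}^D$$ (coordinate-wise median). Then, with probability at least $$p_D=\frac{\sum_{j=\tilde{D}}^{D}\binom{n_2}{j}\binom{n_1-n_2}{D-j}}{\binom{n_1}{D}},\qquad n_1=\binom{N-1}{k},\ n_2=\binom{N-C-1}{k},\ \tilde{D}=\lfloor D/2\rfloor+1,$$ it holds that $$\widetilde{\pi}_D(o,\mathbf{m}_{\mathrm{adv}})\in\mathsf{Range}(\mathcal{A}_{\mathrm{benign}}):=\{a\in\mathbb{R}^L:\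 \forall\,1\le l\le L,\ \exists\,\underline{a},\overline{a}\in\mathcal{A}_{\mathrm{benign}}\text{ with }\underline{a}_l\le a_l\le\overline{a}_l\}.$$
   Context: For a list $\mathbf{m}=[m_1,\dots,m_n]$ and $T=\{j_1<\dots<j_k\}\subseteq[n]$, $\mathsf{Ablate}(\mathbf{m},T):=[m_{j_1},\dots,m_{j_k}]$. $\mathcal{H}(n,k)$ is the set of all $k$-element subsets of $\{1,\dots,n\}$. $\mathsf{Median}$ of a list of vectors in $\mathbb{R}^L$ is the coordinate-wise median. Setting: an agent receives $N-1$ messages, of which an adversary may corrupt up to $C$, so the received list $\mathbf{m}_{\mathrm{adv}}$ differs from the uncorrupted list $\mathbf{m}_{\mathrm{benign}}$ in at most $C$ positions. Binomial coefficients $\binom{a}{b}$ with $b>a$ or $b<0$ are $0$. *)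

theory Defs
  imports "HOL-Analysis.Analysis" "HOL-Probability.Probability"
begin

definition Hsets :: "nat \<Rightarrow> nat \<Rightarrow> nat set set" where
  "Hsets n k = {T. T \<subseteq> {1..n} \<and> card T = k}"

text \<open>Ablate(m,T) with 1-based positions: the sublist of m at positions in T, in order.\<close>
definition Ablate :: "'m list \<Rightarrow> nat set \<Rightarrow> 'm list" where
  "Ablate ms T = nths ms {i. Suc i \<in> T}"

definition median_real :: "real list \<Rightarrow> real" where
  "median_real xs = (let ys = sort xs; n = length xs in
     if odd n then ys ! (n div 2) else (ys ! (n div 2 - 1) + ys ! (n div 2)) / 2)"

definition Median :: "(real ^ 'l) list \<Rightarrow> real ^ 'l" where
  "Median vs = (\<chi> l. median_real (map (\<lambda>v. v $ l) vs))"

definition Range_set :: "(real ^ 'l) set \<Rightarrow> (real ^ 'l) set" where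
  "Range_set A = {a. \<forall>l. \<exists>lo\<in>A. \<exists>hi\<in>A. lo $ l \<le> a $ l \<and> a $ l \<le> hi $ l}"

end

theory Submission imports Defs "HOL-Combinatorics.Multiset_Permutations" begin

lemma nths_agree:
  "length xs = length ys \<Longrightarrow> (\<And>i. i \<in> I \<Longrightarrow> i < length xs \<Longrightarrow> xs ! i = ys ! i)
   \<Longrightarrow> nths xs I = nths ys I"
proof (induction xs arbitrary: ys I)
  case Nil then show ?case by simp
next
  case (Cons x xs)
  then obtain y ys' where ys: "ys = y # ys'" by (cases ys) auto
  have "x = y" if "0 \<in> I" using Cons.prems(2)[of 0] that ys by simp
  moreover have "nths xs {j. Suc j \<in> I} = nths ys' {j. Suc j \<in> I}"
    apply (rule Cons.IH) using Cons.prems ys by fastforce+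
  ultimately show ?case by (simp add: ys nths_Cons)
qed

lemma count_le_median:
  fixes xs :: "real list"
  assumes "xs \<noteq> []"
  shows "(length xs + 1) div 2 \<le> card {i. i < length xs \<and> xs ! i \<le> median_real xs}"
    and "(length xs + 1) div 2 \<le> card {i. i < length xs \<and> xs ! i \<ge> median_real xs}"
proof -
  let ?n = "length xs" and ?m = "median_real xs" and ?ys = "sort xs"
  have len: "length ?ys = ?n" by simp
  have so: "sorted ?ys" by simp
  have eqlen: "length (filter P xs) = length (filter P ?ys)" for P
    by (simp add: filter_sort)
  have n0: "?n > 0" using assms by simp
  define q where "q = (?n + 1) div 2 - 1"
  have qn: "q < ?n" unfolding q_def using n0 by linarith
  have q1: "?ys ! q \<le> ?m"
  proof (cases "odd ?n")
    case True
    then have "q = ?n div 2" unfolding q_def by presburger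
    then show ?thesis using True by (simp add: median_real_def Let_def)
  next
    case False
    then have qq: "q = ?n div 2 - 1" "?n div 2 < ?n" "q \<le> ?n div 2" unfolding q_def using n0 by auto
    have "?ys ! q \<le> ?ys ! (?n div 2)" using sorted_nth_mono[OF so qq(3)] qq len by simp
    then show ?thesis using False qq by (simp add: median_real_def Let_def)
  qed
  have "{0..q} \<subseteq> {i. i < ?n \<and> ?ys ! i \<le> ?m}"
  proof
    fix i assume "i \<in> {0..q}"
    then have "i \<le> q" by simp
    then show "i \<in> {i. i < ?n \<and> ?ys ! i \<le> ?m}"
      using sorted_nth_mono[OF so, of i q] qn q1 len by fastforce
  qed
  then have "card {0..q} \<le> card {i. i < ?n \<and> ?ys ! i \<le> ?m}"
    by (intro card_mono) auto
  then have "q + 1 \<le> card {i. i < ?n \<and> ?ys ! i \<le> ?m}" by simp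
  also have "\<dots> = card {i. i < ?n \<and> xs ! i \<le> ?m}"
    using eqlen[of "\<lambda>x. x \<le> ?m"] by (simp add: length_filter_conv_card)
  finally show "(length xs + 1) div 2 \<le> card {i. i < length xs \<and> xs ! i \<le> median_real xs}"
    unfolding q_def by linarith
  define r where "r = ?n div 2"
  have rn: "r < ?n" unfolding r_def using n0 by linarith
  have r1: "?ys ! r \<ge> ?m"
  proof (cases "odd ?n")
    case True
    then show ?thesis by (simp add: median_real_def Let_def r_def)
  next
    case False
    then have qq: "?n div 2 - 1 \<le> r" "r < ?n" unfolding r_def using n0 by auto
    have "?ys ! (?n div 2 - 1) \<le> ?ys ! r" using sorted_nth_mono[OF so qq(1)] qq len by simp
    then show ?thesis using False by (simp add: median_real_def Let_def r_def)
  qed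
  have "{r..<?n} \<subseteq> {i. i < ?n \<and> ?ys ! i \<ge> ?m}"
  proof
    fix i assume "i \<in> {r..<?n}"
    then show "i \<in> {i. i < ?n \<and> ?ys ! i \<ge> ?m}"
      using sorted_nth_mono[OF so, of r i] r1 len by fastforce
  qed
  then have "card {r..<?n} \<le> card {i. i < ?n \<and> ?ys ! i \<ge> ?m}"
    by (intro card_mono) auto
  then have "?n - r \<le> card {i. i < ?n \<and> ?ys ! i \<ge> ?m}" by simp
  also have "\<dots> = card {i. i < ?n \<and> xs ! i \<ge> ?m}"
    using eqlen[of "\<lambda>x. x \<ge> ?m"] by (simp add: length_filter_conv_card)
  finally show "(length xs + 1) div 2 \<le> card {i. i < length xs \<and> xs ! i \<ge> median_real xs}"
    unfolding r_def by linarith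
qed

lemma median_good:
  fixes xs :: "real list"
  assumes "xs \<noteq> []" "G \<subseteq> {..<length xs}" "length xs div 2 + 1 \<le> card G"
  shows "\<exists>i\<in>G. xs ! i \<le> median_real xs" "\<exists>i\<in>G. xs ! i \<ge> median_real xs"
proof -
  let ?n = "length xs"
  have key: "A \<inter> G \<noteq> {}" if "A \<subseteq> {..<?n}" "(?n + 1) div 2 \<le> card A" for A
  proof
    assume e: "A \<inter> G = {}"
    have "card (A \<union> G) = card A + card G"
      using e that(1) assms(2) by (intro card_Un_disjoint) (auto intro: finite_subset)
    moreover have "card (A \<union> G) \<le> card {..<?n}" using that(1) assms(2)
      by (intro card_mono) auto
    ultimately show False using that(2) assms(3) by simp
  qed
  show "\<exists>i\<in>G. xs ! i \<le> median_real xs"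
    using key[OF _ count_le_median(1)[OF assms(1)]] by auto
  show "\<exists>i\<in>G. xs ! i \<ge> median_real xs"
    using key[OF _ count_le_median(2)[OF assms(1)]] by auto
qed

lemma count_tuples:
  assumes "finite A"
  shows "card {ts. distinct ts \<and> set ts \<subseteq> A \<and> length ts = D \<and> P (set ts)}
       = card {B. B \<subseteq> A \<and> card B = D \<and> P B} * fact D"
proof -
  let ?I = "{B. B \<subseteq> A \<and> card B = D \<and> P B}"
  have fIs: "?I \<subseteq> Pow A" by blast
  have fI: "finite ?I" using finite_subset[OF fIs] assms by simp
  have eq: "{ts. distinct ts \<and> set ts \<subseteq> A \<and> length ts = D \<and> P (set ts)}
          = (\<Union>B\<in>?I. permutations_of_set B)"
    by (auto simp: permutations_of_set_def distinct_card)
  have "card (\<Union>B\<in>?I. permutations_of_set B) = (\<Sum>B\<in>?I. card (permutations_of_set B))"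
    apply (rule card_UN_disjoint[OF fI])
     apply simp
    by (auto simp: permutations_of_set_def)
  also have "\<dots> = (\<Sum>B\<in>?I. fact D)"
  proof (rule sum.cong[OF refl])
    fix B assume "B \<in> ?I"
    then have "finite B" "card B = D" using assms finite_subset by blast+
    then show "card (permutations_of_set B) = fact D" by simp
  qed
  finally show ?thesis using eq by simp
qed

lemma count_split:
  assumes "finite A" "S \<subseteq> A" "j \<le> D"
  shows "card {B. B \<subseteq> A \<and> card B = D \<and> card (B \<inter> S) = j}
       = (card S choose j) * ((card A - card S) choose (D - j))"
proof -
  let ?X = "{X. X \<subseteq> S \<and> card X = j}" and ?Y = "{Y. Y \<subseteq> A - S \<and> card Y = D - j}"
  have fS: "finite S" using assms finite_subset by blast
  have fAS: "finite (A - S)" using assms by simp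
  have eq: "{B. B \<subseteq> A \<and> card B = D \<and> card (B \<inter> S) = j} = (\<lambda>(X,Y). X \<union> Y) ` (?X \<times> ?Y)"
  proof (rule set_eqI, rule iffI)
    fix B assume B: "B \<in> {B. B \<subseteq> A \<and> card B = D \<and> card (B \<inter> S) = j}"
    have fB: "finite B" using B assms finite_subset by blast
    have "B = (B \<inter> S) \<union> (B - S)" by blast
    moreover have "card (B - S) = D - j"
    proof -
      have "finite (B \<inter> S)" using fB by simp
      then have "card (B - S) = card B - card (B \<inter> S)" by (rule card_Diff_subset_Int)
      then show ?thesis using B by simp
    qed
    ultimately show "B \<in> (\<lambda>(X,Y). X \<union> Y) ` (?X \<times> ?Y)" using B
      by (intro image_eqI[of _ _ "(B \<inter> S, B - S)"]) auto
  next
    fix B assume "B \<in> (\<lambda>(X,Y). X \<union> Y) ` (?X \<times> ?Y)"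
    then obtain X Y where XY: "B = X \<union> Y" "X \<subseteq> S" "card X = j" "Y \<subseteq> A - S" "card Y = D - j" by auto
    have fX: "finite X" "finite Y" using XY fS fAS finite_subset by blast+
    have dj: "X \<inter> Y = {}" using XY by blast
    have "card B = D" using XY card_Un_disjoint[OF fX dj] assms(3) by simp
    moreover have "B \<inter> S = X" using XY by blast
    ultimately show "B \<in> {B. B \<subseteq> A \<and> card B = D \<and> card (B \<inter> S) = j}" using XY assms by auto
  qed
  have inj: "inj_on (\<lambda>(X,Y). X \<union> Y) (?X \<times> ?Y)"
  proof (rule inj_onI, clarify)
    fix X Y X' Y' assume h: "X \<subseteq> S" "Y \<subseteq> A - S" "X' \<subseteq> S" "Y' \<subseteq> A - S" "X \<union> Y = X' \<union> Y'"
    have "X = (X \<union> Y) \<inter> S" "X' = (X' \<union> Y') \<inter> S" "Y = (X \<union> Y) - S" "Y' = (X' \<union> Y') - S" using h by blast+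
    then show "X = X' \<and> Y = Y'" using h(5) by blast
  qed
  have "card {B. B \<subseteq> A \<and> card B = D \<and> card (B \<inter> S) = j} = card ((\<lambda>(X,Y). X \<union> Y) ` (?X \<times> ?Y))"
    unfolding eq ..
  also have "\<dots> = card (?X \<times> ?Y)" by (rule card_image[OF inj])
  also have "\<dots> = card ?X * card ?Y" by (rule card_cartesian_product)
  also have "\<dots> = (card S choose j) * ((card A - card S) choose (D - j))"
    using n_subsets[OF fS] n_subsets[OF fAS] card_Diff_subset[OF fS assms(2)] by simp
  finally show ?thesis .
qed

lemma count_tail:
  assumes "finite A" "S \<subseteq> A"
  shows "card {B. B \<subseteq> A \<and> card B = D \<and> Dt \<le> card (B \<inter> S)}
       = (\<Sum>j = Dt..D. (card S choose j) * ((card A - card S) choose (D - j)))"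
proof -
  have fin: "finite {B. B \<subseteq> A \<and> card B = D \<and> card (B \<inter> S) = j}" for j
  proof -
    have "{B. B \<subseteq> A \<and> card B = D \<and> card (B \<inter> S) = j} \<subseteq> Pow A" by blast
    then show ?thesis using finite_subset assms(1) by blast
  qed
  have eq: "{B. B \<subseteq> A \<and> card B = D \<and> Dt \<le> card (B \<inter> S)}
      = (\<Union>j\<in>{Dt..D}. {B. B \<subseteq> A \<and> card B = D \<and> card (B \<inter> S) = j})"
  proof (rule set_eqI, rule iffI)
    fix B assume B: "B \<in> {B. B \<subseteq> A \<and> card B = D \<and> Dt \<le> card (B \<inter> S)}"
    have "finite B" using B assms finite_subset by blast
    then have "card (B \<inter> S) \<le> D" using B card_mono[of B "B \<inter> S"] by auto
    then show "B \<in> (\<Union>j\<in>{Dt..D}. {B. B \<subseteq> A \<and> card B = D \<and> card (B \<inter> S) = j})" using B by auto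
  qed auto
  have "card {B. B \<subseteq> A \<and> card B = D \<and> Dt \<le> card (B \<inter> S)}
     = (\<Sum>j\<in>{Dt..D}. card {B. B \<subseteq> A \<and> card B = D \<and> card (B \<inter> S) = j})"
    unfolding eq by (rule card_UN_disjoint) (auto simp: fin)
  also have "\<dots> = (\<Sum>j = Dt..D. (card S choose j) * ((card A - card S) choose (D - j)))"
    by (rule sum.cong[OF refl]) (use count_split[OF assms] in auto)
  finally show ?thesis .
qed

theorem theorem3:
  fixes N C k D :: nat
    and pihat :: "'o \<Rightarrow> 'm list \<Rightarrow> real ^ 'l::finite"
    and Act :: "(real ^ 'l) set"
    and obs :: 'o
    and m_benign m_adv :: "'m list"
  assumes "N \<ge> 2"
    and "2 * C < N - 1"
    and "1 \<le> k" and "k \<le> N - 1"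
    and "2 * ((N - 1 - C) choose k) \<ge> (N - 1) choose k"
    and "\<And>o' ms. length ms = k \<Longrightarrow> pihat o' ms \<in> Act"
    and "length m_benign = N - 1" and "length m_adv = N - 1"
    and "card {i. i < N - 1 \<and> m_benign ! i \<noteq> m_adv ! i} \<le> C"
    and "0 < D" and "D \<le> (N - 1) choose k"
  shows
    "let A_benign = (\<Union>T\<in>Hsets (N - 1) k. {pihat obs (Ablate m_benign T)});
         n1 = (N - 1) choose k;
         n2 = (N - C - 1) choose k;
         Dt = D div 2 + 1;
         p_D = real (\<Sum>j = Dt..D. (n2 choose j) * ((n1 - n2) choose (D - j))) / real (n1 choose D);
         Ts = pmf_of_set {ts. distinct ts \<and> set ts \<subseteq> Hsets (N - 1) k \<and> length ts = D}
     in measure_pmf.prob Ts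
          {ts. Median (map (\<lambda>T. pihat obs (Ablate m_adv T)) ts) \<in> Range_set A_benign} \<ge> p_D"
proof -
  define H where "H = Hsets (N - 1) k"
  define A_benign where "A_benign = (\<Union>T\<in>H. {pihat obs (Ablate m_benign T)})"
  define Tup where "Tup = {ts. distinct ts \<and> set ts \<subseteq> H \<and> length ts = D}"
  define Bad where "Bad = {i. i < N - 1 \<and> m_benign ! i \<noteq> m_adv ! i}"
  define E where "E = {ts. Median (map (\<lambda>T. pihat obs (Ablate m_adv T)) ts) \<in> Range_set A_benign}"
  define Dt where "Dt = D div 2 + 1"
  have Hsub: "H \<subseteq> Pow {1..N-1}" unfolding H_def Hsets_def by blast
  have fH: "finite H" using finite_subset[OF Hsub] by simp
  have cH0: "card {1..N-1} = N - 1" by simp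
  have cH: "card H = (N - 1) choose k" unfolding H_def Hsets_def
    using n_subsets[of "{1..N-1}" k] cH0 by (simp only: finite_atLeastAtMost)
  have cBad: "card Bad \<le> C" using assms(9) unfolding Bad_def .
  define Good where "Good = {1..N-1} - Suc ` Bad"
  have sb: "Suc ` Bad \<subseteq> {1..N-1}" unfolding Bad_def by auto
  have cSB: "card (Suc ` Bad) = card Bad" by (intro card_image) auto
  have cG: "card Good = (N - 1) - card Bad"
    unfolding Good_def using card_Diff_subset[OF _ sb] cSB by (simp add: finite_subset[OF sb])
  have "N - 1 - C \<le> card Good" using cG cBad by linarith
  then obtain X where X: "X \<subseteq> Good" "card X = N - 1 - C" "finite X"
    by (rule obtain_subset_with_card_n)
  define S where "S = {T. T \<subseteq> X \<and> card T = k}"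
  have SH: "S \<subseteq> H" using X(1) unfolding S_def H_def Hsets_def Good_def by auto
  have cS: "card S = (N - C - 1) choose k"
  proof -
    have e: "N - C - 1 = N - 1 - C" by simp
    show ?thesis unfolding S_def e using n_subsets[OF X(3), of k] X(2) by simp
  qed
  have clean: "Ablate m_adv T = Ablate m_benign T" if "T \<in> S" for T
    unfolding Ablate_def
  proof (rule nths_agree)
    show "length m_adv = length m_benign" using assms(7,8) by simp
    fix i assume i: "i \<in> {i. Suc i \<in> T}" "i < length m_adv"
    then have "Suc i \<in> Good" using that X(1) unfolding S_def by auto
    then have "i \<notin> Bad" unfolding Good_def by auto
    then show "m_adv ! i = m_benign ! i" using i assms(8) unfolding Bad_def by auto
  qed
  have good: "ts \<in> E" if ts: "ts \<in> Tup" "Dt \<le> card (set ts \<inter> S)" for ts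
  proof -
    define G where "G = {i. i < length ts \<and> ts ! i \<in> S}"
    have lts: "length ts = D" "distinct ts" using ts unfolding Tup_def by auto
    have "card G = length (filter (\<lambda>T. T \<in> S) ts)" unfolding G_def by (simp add: length_filter_conv_card)
    also have "\<dots> = card (set (filter (\<lambda>T. T \<in> S) ts))" using distinct_card[OF distinct_filter[OF lts(2)], of "\<lambda>T. T \<in> S"] by simp
    also have "set (filter (\<lambda>T. T \<in> S) ts) = set ts \<inter> S" by auto
    finally have cardG: "card G = card (set ts \<inter> S)" .
    have inA: "pihat obs (Ablate m_adv (ts ! i)) \<in> A_benign" if "i \<in> G" for i
    proof -
      have tS: "ts ! i \<in> S" using that unfolding G_def by auto
      then have tH: "ts ! i \<in> H" using SH by blast
      have "pihat obs (Ablate m_adv (ts ! i)) = pihat obs (Ablate m_benign (ts ! i))"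
        using clean[OF tS] by simp
      moreover have "pihat obs (Ablate m_benign (ts ! i)) \<in> A_benign"
        unfolding A_benign_def using tH by blast
      ultimately show ?thesis by simp
    qed
    have "Median (map (\<lambda>T. pihat obs (Ablate m_adv T)) ts) \<in> Range_set A_benign"
      unfolding Range_set_def
    proof (rule, rule allI)
      fix l
      define xs where "xs = map (\<lambda>T. pihat obs (Ablate m_adv T) $ l) ts"
      have med: "Median (map (\<lambda>T. pihat obs (Ablate m_adv T)) ts) $ l = median_real xs"
        unfolding Median_def xs_def by (simp add: o_def)
      have ne: "xs \<noteq> []" using lts assms(10) unfolding xs_def by auto
      have Gs: "G \<subseteq> {..<length xs}" unfolding G_def xs_def by auto
      have cG2: "length xs div 2 + 1 \<le> card G" using cardG ts(2) lts unfolding xs_def Dt_def by simp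
      obtain i where i: "i \<in> G" "xs ! i \<le> median_real xs" using median_good(1)[OF ne Gs cG2] by blast
      obtain j where j: "j \<in> G" "xs ! j \<ge> median_real xs" using median_good(2)[OF ne Gs cG2] by blast
      have il: "i < length ts" "j < length ts" using i j unfolding G_def by auto
      have xi: "xs ! i = pihat obs (Ablate m_adv (ts ! i)) $ l" unfolding xs_def using il(1) by simp
      have xj: "xs ! j = pihat obs (Ablate m_adv (ts ! j)) $ l" unfolding xs_def using il(2) by simp
      show "\<exists>lo\<in>A_benign. \<exists>hi\<in>A_benign.
          lo $ l \<le> Median (map (\<lambda>T. pihat obs (Ablate m_adv T)) ts) $ l \<and>
          Median (map (\<lambda>T. pihat obs (Ablate m_adv T)) ts) $ l \<le> hi $ l"
        unfolding med
      proof (intro bexI conjI)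
        show "pihat obs (Ablate m_adv (ts ! i)) $ l \<le> median_real xs" using i(2) xi by simp
        show "median_real xs \<le> pihat obs (Ablate m_adv (ts ! j)) $ l" using j(2) xj by simp
      qed (rule inA[OF j(1)], rule inA[OF i(1)])
    qed
    then show ?thesis unfolding E_def by (rule CollectI)
  qed
  define E' where "E' = {ts. distinct ts \<and> set ts \<subseteq> H \<and> length ts = D \<and> Dt \<le> card (set ts \<inter> S)}"
  have E'sub: "E' \<subseteq> E"
  proof
    fix ts assume "ts \<in> E'"
    then show "ts \<in> E" using good[of ts] unfolding E'_def Tup_def by blast
  qed
  have cTup: "card Tup = (((N - 1) choose k) choose D) * fact D"
    using count_tuples[OF fH, of D "\<lambda>_. True"] n_subsets[OF fH, of D] cH unfolding Tup_def by simp
  have cE': "card E' = (\<Sum>j = Dt..D. (card S choose j) * ((card H - card S) choose (D - j))) * fact D"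
    using count_tuples[OF fH, of D "\<lambda>B. Dt \<le> card (B \<inter> S)"] count_tail[OF fH SH, of D Dt]
    unfolding E'_def by simp
  have pos: "card Tup > 0" unfolding cTup using assms(11) by simp
  then have fT: "finite Tup" "Tup \<noteq> {}" using card_gt_0_iff by blast+
  have E'T: "E' \<subseteq> Tup" unfolding E'_def Tup_def by auto
  have "measure_pmf.prob (pmf_of_set Tup) E' \<le> measure_pmf.prob (pmf_of_set Tup) E"
    using E'sub by (intro measure_pmf.finite_measure_mono) auto
  moreover have "measure_pmf.prob (pmf_of_set Tup) E' = real (card E') / real (card Tup)"
  proof -
    have "Tup \<inter> E' = E'" using E'T by blast
    then show ?thesis using measure_pmf_of_set[OF fT(2) fT(1), of E'] by simp
  qed
  moreover have "real (card E') / real (card Tup)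
     = real (\<Sum>j = Dt..D. (((N - C - 1) choose k) choose j) * ((((N - 1) choose k) - ((N - C - 1) choose k)) choose (D - j)))
       / real (((N - 1) choose k) choose D)"
    unfolding cE' cTup cS cH by simp
  ultimately show ?thesis
    unfolding Let_def H_def[symmetric] A_benign_def[symmetric] Tup_def[symmetric] E_def[symmetric] Dt_def[symmetric]
    by simp
qed

end
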